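(* Let $G=(V,E)$ be a graph and let $\{A_\xi:\xi<\mu\}$ (for some ordinal $\mu$) be a family of subsets of $V$ with $\bigcup_{\xi<\mu}A_\xi=V$, such that for every $\xi<\mu$ the subgraph of $G$ spanned by $A_\xi$ has chromatic number at most $\omega$. Write $\bigcup A_{<\xi}=\bigcup\{A_\zeta:\zeta<\xi\}$. Suppose that for all $\xi<\mu$ and all $x\in A_\xi\setminus \bigcup A_{<\xi}$ we have $|N_G(x)\cap \bigcup A_{<\xi}|<\omega$. Then the chromatic number of $G$ is at most $\omega$.
   Context: For a graph $G=(V,E)$ and $v\in V$, $N_G(v)=\{w\in V:\{v,w\}\in E\}$. The chromatic number of $G$ is the least cardinal $\kappa$ such that $V$ is covered by $\kappa$ many independent sets. *)

theory Defs
  imports Main "HOL-Library.Countable_Set"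
begin

definition graph :: "'a set \<Rightarrow> 'a set set \<Rightarrow> bool" where
  "graph V E \<longleftrightarrow> (\<forall>e\<in>E. \<exists>x y. x \<noteq> y \<and> x \<in> V \<and> y \<in> V \<and> e = {x, y})"

definition nbhd :: "'a set \<Rightarrow> 'a set set \<Rightarrow> 'a \<Rightarrow> 'a set" where
  "nbhd V E v = {w \<in> V. {v, w} \<in> E}"

definition independent :: "'a set \<Rightarrow> 'a set set \<Rightarrow> 'a set \<Rightarrow> bool" where
  "independent V E S \<longleftrightarrow> S \<subseteq> V \<and> (\<forall>x\<in>S. \<forall>y\<in>S. {x, y} \<notin> E)"

definition chromatic_le_omega :: "'a set \<Rightarrow> 'a set set \<Rightarrow> bool" where
  "chromatic_le_omega V E \<longleftrightarrow>
     (\<exists>\<C>. countable \<C> \<and> (\<forall>S\<in>\<C>. independent V E S) \<and> V \<subseteq> \<Union>\<C>)"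

definition induced_edges :: "'a set set \<Rightarrow> 'a set \<Rightarrow> 'a set set" where
  "induced_edges E A = {e \<in> E. e \<subseteq> A}"

end

theory Submission
  imports Defs
begin

theorem mainTheorem1:
  fixes V :: "'a set" and E :: "'a set set"
    and r :: "'i rel" and A :: "'i \<Rightarrow> 'a set"
  assumes "graph V E"
    and "Well_order r"
    and "\<forall>\<xi>\<in>Field r. A \<xi> \<subseteq> V"
    and "(\<Union>\<xi>\<in>Field r. A \<xi>) = V"
    and "\<forall>\<xi>\<in>Field r. chromatic_le_omega (A \<xi>) (induced_edges E (A \<xi>))"
    and "\<forall>\<xi>\<in>Field r. \<forall>x \<in> A \<xi> - (\<Union>\<zeta>\<in>{\<zeta>. (\<zeta>, \<xi>) \<in> r - Id}. A \<zeta>).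
           finite (nbhd V E x \<inter> (\<Union>\<zeta>\<in>{\<zeta>. (\<zeta>, \<xi>) \<in> r - Id}. A \<zeta>))"
  shows "chromatic_le_omega V E"
proof -
  note gr = assms(1) and wo = assms(2) and sub = assms(3) and cov = assms(4)
    and chr = assms(5) and fin = assms(6)
  have wf: "wf (r - Id)" using wo by (simp add: order_on_defs)
  have tot: "total_on (Field r) r" using wo by (simp add: order_on_defs)
  have "\<forall>x\<in>V. \<exists>\<xi>. \<xi> \<in> Field r \<and> x \<in> A \<xi> \<and> (\<forall>\<zeta>. (\<zeta>, \<xi>) \<in> r - Id \<longrightarrow> x \<notin> A \<zeta>)"
  proof
    fix x assume "x \<in> V"
    then obtain \<xi>0 where \<xi>0: "\<xi>0 \<in> Field r" "x \<in> A \<xi>0" using cov by blast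
    have "\<xi>0 \<in> {\<xi>. \<xi> \<in> Field r \<and> x \<in> A \<xi>}" using \<xi>0 by simp
    from wfE_min[OF wf this] obtain \<xi> where
      "\<xi> \<in> {\<xi>. \<xi> \<in> Field r \<and> x \<in> A \<xi>}"
      "\<And>y. (y, \<xi>) \<in> r - Id \<Longrightarrow> y \<notin> {\<xi>. \<xi> \<in> Field r \<and> x \<in> A \<xi>}" by metis
    then show "\<exists>\<xi>. \<xi> \<in> Field r \<and> x \<in> A \<xi> \<and> (\<forall>\<zeta>. (\<zeta>, \<xi>) \<in> r - Id \<longrightarrow> x \<notin> A \<zeta>)"
      by (auto simp: FieldI1)
  qed
  then obtain lvl where lvl: "\<And>x. x \<in> V \<Longrightarrow> lvl x \<in> Field r \<and> x \<in> A (lvl x) \<and>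
      (\<forall>\<zeta>. (\<zeta>, lvl x) \<in> r - Id \<longrightarrow> x \<notin> A \<zeta>)" by metis
  have "\<forall>\<xi>\<in>Field r. \<exists>C. countable C \<and> (\<forall>S\<in>C. independent (A \<xi>) (induced_edges E (A \<xi>)) S)
        \<and> A \<xi> \<subseteq> \<Union>C" using chr by (simp add: chromatic_le_omega_def)
  then obtain C where C: "\<And>\<xi>. \<xi> \<in> Field r \<Longrightarrow> countable (C \<xi>) \<and>
      (\<forall>S\<in>C \<xi>. independent (A \<xi>) (induced_edges E (A \<xi>)) S) \<and> A \<xi> \<subseteq> \<Union>(C \<xi>)" by metis
  define cls where "cls x = (SOME S. S \<in> C (lvl x) \<and> x \<in> S)" for x
  have cls: "x \<in> V \<Longrightarrow> cls x \<in> C (lvl x) \<and> x \<in> cls x" for x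
  proof -
    assume "x \<in> V"
    with lvl C have "\<exists>S. S \<in> C (lvl x) \<and> x \<in> S" by blast
    then show ?thesis unfolding cls_def by (rule someI_ex)
  qed
  define cidx where "cidx x = to_nat_on (C (lvl x)) (cls x)" for x
  define R where "R = inv_image (r - Id) lvl"
  have wfR: "wf R" unfolding R_def using wf by (rule wf_inv_image)
  define P where "P x = {y \<in> nbhd V E x. (lvl y, lvl x) \<in> r - Id}" for x
  define F where "F g x = (cidx x, LEAST m. (cidx x, m) \<notin> g ` P x)"
    for g :: "'a \<Rightarrow> nat \<times> nat" and x
  define f where "f = wfrec R F"
  have feq: "f x = (cidx x, LEAST m. (cidx x, m) \<notin> f ` P x)" for x
  proof -
    have "f x = F (cut f R x) x" unfolding f_def by (rule wfrec[OF wfR])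
    moreover have "cut f R x ` P x = f ` P x"
      by (rule image_cong) (auto simp: P_def R_def cut_apply)
    ultimately show ?thesis by (simp add: F_def)
  qed
  have finP: "x \<in> V \<Longrightarrow> finite (P x)" for x
  proof -
    assume x: "x \<in> V"
    have "x \<in> A (lvl x) - (\<Union>\<zeta>\<in>{\<zeta>. (\<zeta>, lvl x) \<in> r - Id}. A \<zeta>)" using lvl[OF x] by blast
    then have "finite (nbhd V E x \<inter> (\<Union>\<zeta>\<in>{\<zeta>. (\<zeta>, lvl x) \<in> r - Id}. A \<zeta>))"
      using fin lvl[OF x] by blast
    moreover have "P x \<subseteq> nbhd V E x \<inter> (\<Union>\<zeta>\<in>{\<zeta>. (\<zeta>, lvl x) \<in> r - Id}. A \<zeta>)"
      using lvl by (auto simp: P_def nbhd_def)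
    ultimately show ?thesis by (rule finite_subset[rotated])
  qed
  have avoid: "x \<in> V \<Longrightarrow> y \<in> P x \<Longrightarrow> f x \<noteq> f y" for x y
  proof -
    assume x: "x \<in> V" and y: "y \<in> P x"
    have "finite (f ` P x)" using finP[OF x] by simp
    then have "finite (snd ` f ` P x)" by simp
    then have "\<exists>m. m \<notin> snd ` f ` P x" using infinite_UNIV_nat
      by (metis UNIV_eq_I finite_UNIV)
    then have "\<exists>m. (cidx x, m) \<notin> f ` P x" by (metis image_eqI snd_conv)
    then have "(cidx x, LEAST m. (cidx x, m) \<notin> f ` P x) \<notin> f ` P x" by (rule LeastI_ex)
    then show ?thesis using y feq[of x] by auto
  qed
  define \<C> where "\<C> = range (\<lambda>p. {x \<in> V. f x = p})"
  show ?thesis unfolding chromatic_le_omega_def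
  proof (intro exI conjI ballI)
    show "countable \<C>" unfolding \<C>_def by simp
    show "V \<subseteq> \<Union>\<C>" unfolding \<C>_def by auto
  next
    fix S assume "S \<in> \<C>"
    then obtain p where S: "S = {x \<in> V. f x = p}" unfolding \<C>_def by auto
    show "independent V E S" unfolding independent_def
    proof (intro conjI ballI)
      show "S \<subseteq> V" using S by auto
    next
      fix x y assume xS: "x \<in> S" and yS: "y \<in> S"
      then have x: "x \<in> V" and y: "y \<in> V" and fxy: "f x = f y" using S by auto
      show "{x, y} \<notin> E"
      proof
        assume e: "{x, y} \<in> E"
        have "x \<noteq> y" using gr e unfolding graph_def by (metis doubleton_eq_iff insert_absorb2)
        show False
        proof (cases "lvl x = lvl y")
          case True
          let ?\<xi> = "lvl x"
          have \<xi>: "?\<xi> \<in> Field r" using lvl[OF x] by blast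
          have cx: "cls x \<in> C ?\<xi>" "x \<in> cls x" using cls[OF x] by auto
          have cy: "cls y \<in> C ?\<xi>" "y \<in> cls y" using cls[OF y] True by auto
          have "cidx x = cidx y" using fxy feq[of x] feq[of y] by simp
          then have "to_nat_on (C ?\<xi>) (cls x) = to_nat_on (C ?\<xi>) (cls y)"
            unfolding cidx_def using True by simp
          then have "cls x = cls y" using C[OF \<xi>] cx cy
            by (meson inj_on_def inj_on_to_nat_on)
          then have ind: "independent (A ?\<xi>) (induced_edges E (A ?\<xi>)) (cls x)"
            using C[OF \<xi>] cx by blast
          then have "cls x \<subseteq> A ?\<xi>" by (simp add: independent_def)
          then have "{x, y} \<in> induced_edges E (A ?\<xi>)"
            using e cx cy \<open>cls x = cls y\<close> by (auto simp: induced_edges_def)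
          then show False using ind cx cy \<open>cls x = cls y\<close> by (auto simp: independent_def)
        next
          case False
          have "lvl x \<in> Field r" "lvl y \<in> Field r" using lvl x y by auto
          then have "(lvl x, lvl y) \<in> r - Id \<or> (lvl y, lvl x) \<in> r - Id"
            using tot False unfolding total_on_def by auto
          then show False
          proof
            assume "(lvl x, lvl y) \<in> r - Id"
            then have "x \<in> P y" using x e by (auto simp: P_def nbhd_def insert_commute)
            then show False using avoid[OF y] fxy by metis
          next
            assume "(lvl y, lvl x) \<in> r - Id"
            then have "y \<in> P x" using y e by (auto simp: P_def nbhd_def)
            then show False using avoid[OF x] fxy by auto
          qed
        qed
      qed
    qed
  qed
qed

end
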